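(* Let $A\subseteq B$ be commutative semirings, $S=A[x_1,\dots,x_n]$, and $\rho$ a congruence on $B$ with $\rho\neq B\times B$. Then: (1) $Z_\rho(\{(0,1)\})(B)=\emptyset$ and $Z_\rho(\{(f,f)\})(B)=B^n$ for all $f\in S$; (2) for non-empty $T_1,T_2\subseteq S\times S$, $Z_\rho(T_1)(B)\cup Z_\rho(T_2)(B)\subseteq Z_\rho(T_1\ast T_2)(B)$; (3) the intersection of any family of $\rho$-algebraic varieties is a $\rho$-algebraic variety.
   Context: Semirings are commutative with $0$ and $1\neq0$, $0a=0$; congruences are equivalence relations compatible with $+,\cdot$. For non-empty $T\subseteq S\times S$, $Z_\rho(T)(B)=\{P\in B^n:(f(P),g(P))\in\rho\ \forall(f,g)\in T\}$; a $\rho$-algebraic variety is a set of this form. The twisted product is $(f_1,g_1)\ast(f_2,g_2)=(f_1f_2+g_1g_2,\ f_1g_2+g_1f_2)$ and $T_1\ast T_2=\{t_1\ast t_2:t_1\in T_1,t_2\in T_2\}$. *)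

theory Defs
  imports "HOL-Library.Poly_Mapping"
begin

text \<open>Polynomials in n variables
  x_0..x_{n-1} are finitely supported maps from monomials (exponent vectors nat =>0 nat)
  to coefficients.\<close>

definition subsemiring :: "'b::comm_semiring_1 set \<Rightarrow> bool" where
  "subsemiring A \<longleftrightarrow> 0 \<in> A \<and> 1 \<in> A \<and> (\<forall>a\<in>A. \<forall>b\<in>A. a + b \<in> A \<and> a * b \<in> A)"

definition congruence :: "('b::comm_semiring_1 \<times> 'b) set \<Rightarrow> bool" where
  "congruence \<rho> \<longleftrightarrow> equiv UNIV \<rho> \<and>
     (\<forall>a b c d. (a, b) \<in> \<rho> \<longrightarrow> (c, d) \<in> \<rho> \<longrightarrow> (a + c, b + d) \<in> \<rho> \<and> (a * c, b * d) \<in> \<rho>)"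

type_synonym 'b mpoly = "(nat \<Rightarrow>\<^sub>0 nat) \<Rightarrow>\<^sub>0 'b"

definition polys :: "'b::comm_semiring_1 set \<Rightarrow> nat \<Rightarrow> 'b mpoly set" where
  "polys A n = {f :: 'b mpoly. \<forall>m\<in>Poly_Mapping.keys f. Poly_Mapping.lookup f m \<in> A \<and> (\<forall>i\<in>Poly_Mapping.keys m. i < n)}"

definition points :: "nat \<Rightarrow> 'b list set" where
  "points n = {P. length P = n}"

definition eval :: "'b::comm_semiring_1 mpoly \<Rightarrow> 'b list \<Rightarrow> 'b" where
  "eval f P = (\<Sum>m\<in>Poly_Mapping.keys f. Poly_Mapping.lookup f m * (\<Prod>i\<in>Poly_Mapping.keys m. (P ! i) ^ Poly_Mapping.lookup m i))"

definition Zrho :: "('b::comm_semiring_1 \<times> 'b) set \<Rightarrow> nat \<Rightarrow> ('b mpoly \<times> 'b mpoly) set \<Rightarrow> 'b list set" where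
  "Zrho \<rho> n T = {P \<in> points n. \<forall>(f, g)\<in>T. (eval f P, eval g P) \<in> \<rho>}"

definition is_variety :: "'b::comm_semiring_1 set \<Rightarrow> ('b \<times> 'b) set \<Rightarrow> nat \<Rightarrow> 'b list set \<Rightarrow> bool" where
  "is_variety A \<rho> n V \<longleftrightarrow>
     (\<exists>T. T \<noteq> {} \<and> T \<subseteq> polys A n \<times> polys A n \<and> V = Zrho \<rho> n T)"

definition twist :: "('b::comm_semiring_1 mpoly \<times> 'b mpoly) \<Rightarrow> ('b mpoly \<times> 'b mpoly) \<Rightarrow> ('b mpoly \<times> 'b mpoly)" where
  "twist t1 t2 = (fst t1 * fst t2 + snd t1 * snd t2, fst t1 * snd t2 + snd t1 * fst t2)"

definition twist_set :: "('b::comm_semiring_1 mpoly \<times> 'b mpoly) set \<Rightarrow> ('b mpoly \<times> 'b mpoly) set \<Rightarrow> ('b mpoly \<times> 'b mpoly) set" where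
  "twist_set T1 T2 = {twist t1 t2 | t1 t2. t1 \<in> T1 \<and> t2 \<in> T2}"

end

theory Submission
  imports Defs
begin

definition L :: "(('a::comm_monoid_add) \<Rightarrow> 'b::comm_semiring_1) \<Rightarrow> ('a \<Rightarrow>\<^sub>0 'b) \<Rightarrow> 'b" where
  "L h f = (\<Sum>m\<in>Poly_Mapping.keys f. Poly_Mapping.lookup f m * h m)"

lemma L_sup: "finite S \<Longrightarrow> Poly_Mapping.keys f \<subseteq> S \<Longrightarrow> L h f = (\<Sum>m\<in>S. Poly_Mapping.lookup f m * h m)"
  unfolding L_def by (rule sum.mono_neutral_left) (auto simp: in_keys_iff)

lemma L_add: "L h (f + g) = L h f + L h g"
proof -
  let ?S = "Poly_Mapping.keys f \<union> Poly_Mapping.keys g"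
  have "L h (f+g) = (\<Sum>m\<in>?S. Poly_Mapping.lookup (f+g) m * h m)"
    using keys_add[of f g] by (intro L_sup) auto
  also have "\<dots> = (\<Sum>m\<in>?S. Poly_Mapping.lookup f m * h m) + (\<Sum>m\<in>?S. Poly_Mapping.lookup g m * h m)"
    by (simp add: lookup_add distrib_right sum.distrib)
  also have "\<dots> = L h f + L h g" using L_sup[of ?S f h] L_sup[of ?S g h] by simp
  finally show ?thesis .
qed

lemma L_zero: "L h 0 = 0" by (simp add: L_def)

lemma L_sum: "L h (sum F I) = (\<Sum>i\<in>I. L h (F i))"
  by (induction I rule: infinite_finite_induct) (auto simp: L_zero L_add)

lemma L_single: "L h (Poly_Mapping.single m c) = c * h m"
  by (simp add: L_def)

lemma sum_singles: "f = (\<Sum>m\<in>Poly_Mapping.keys f. Poly_Mapping.single m (Poly_Mapping.lookup f m))"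
  by (rule poly_mapping_eqI) (simp add: lookup_sum lookup_single when_def in_keys_iff sum.delta)

lemma L_mult:
  assumes hm: "\<And>a b. h (a + b) = h a * h b"
  shows "L h (f * g) = L h f * L h g"
proof -
  have "f * g = (\<Sum>m\<in>Poly_Mapping.keys f. \<Sum>m'\<in>Poly_Mapping.keys g.
      Poly_Mapping.single m (Poly_Mapping.lookup f m) * Poly_Mapping.single m' (Poly_Mapping.lookup g m'))"
    by (subst sum_singles[of f], subst sum_singles[of g]) (simp add: sum_distrib_left sum_distrib_right sum.swap[of _ "Poly_Mapping.keys g"])
  hence "L h (f*g) = (\<Sum>m\<in>Poly_Mapping.keys f. \<Sum>m'\<in>Poly_Mapping.keys g.
      (Poly_Mapping.lookup f m * h m) * (Poly_Mapping.lookup g m' * h m'))"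
    by (simp add: L_sum mult_single L_single hm mult_ac)
  also have "\<dots> = L h f * L h g"
    by (simp add: L_def sum_distrib_left sum_distrib_right sum.swap[of _ "Poly_Mapping.keys g"])
  finally show ?thesis .
qed

definition H :: "'b::comm_semiring_1 list \<Rightarrow> (nat \<Rightarrow>\<^sub>0 nat) \<Rightarrow> 'b" where
  "H P m = (\<Prod>i\<in>Poly_Mapping.keys m. (P ! i) ^ Poly_Mapping.lookup m i)"

lemma H_sup: "finite S \<Longrightarrow> Poly_Mapping.keys m \<subseteq> S \<Longrightarrow> H P m = (\<Prod>i\<in>S. (P ! i) ^ Poly_Mapping.lookup m i)"
  unfolding H_def by (rule prod.mono_neutral_left) (auto simp: in_keys_iff)

lemma H_mult: "H P (a + b) = H P a * H P b"
proof -
  let ?S = "Poly_Mapping.keys a \<union> Poly_Mapping.keys b"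
  have "H P (a+b) = (\<Prod>i\<in>?S. (P ! i) ^ Poly_Mapping.lookup (a+b) i)"
    using keys_add[of a b] by (intro H_sup) auto
  also have "\<dots> = (\<Prod>i\<in>?S. (P ! i) ^ Poly_Mapping.lookup a i) * (\<Prod>i\<in>?S. (P ! i) ^ Poly_Mapping.lookup b i)"
    by (simp add: lookup_add power_add prod.distrib)
  also have "\<dots> = H P a * H P b" using H_sup[of ?S a P] H_sup[of ?S b P] by simp
  finally show ?thesis .
qed

lemma eval_L: "eval f P = L (H P) f" by (simp add: eval_def L_def H_def)

lemma eval_add: "eval (f + g) P = eval f P + eval g P" by (simp add: eval_L L_add)
lemma eval_mult: "eval (f * g) P = eval f P * eval g P" by (simp add: eval_L L_mult H_mult)
lemma eval_0: "eval 0 P = 0" by (simp add: eval_def)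
lemma eval_1: "eval 1 P = 1" by (simp add: eval_def lookup_one)


lemma zero_polys: "0 \<in> polys A n" by (simp add: polys_def)

lemma cong_refl: "congruence \<rho> \<Longrightarrow> (a, a) \<in> \<rho>"
  unfolding congruence_def equiv_def refl_on_def by blast


theorem lemma3p3:
  fixes A :: "'b::comm_semiring_1 set" and \<rho> :: "('b \<times> 'b) set" and n :: nat
  assumes "subsemiring A"
    and "congruence \<rho>"
    and "\<rho> \<noteq> UNIV"
  shows "Zrho \<rho> n {(0, 1)} = {}
    \<and> (\<forall>f\<in>polys A n. Zrho \<rho> n {(f, f)} = points n)
    \<and> (\<forall>T1 T2. T1 \<noteq> {} \<and> T1 \<subseteq> polys A n \<times> polys A n \<and> T2 \<noteq> {} \<and> T2 \<subseteq> polys A n \<times> polys A n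
          \<longrightarrow> Zrho \<rho> n T1 \<union> Zrho \<rho> n T2 \<subseteq> Zrho \<rho> n (twist_set T1 T2))
    \<and> (\<forall>\<V>. (\<forall>V\<in>\<V>. is_variety A \<rho> n V) \<longrightarrow> is_variety A \<rho> n (points n \<inter> \<Inter>\<V>))"
proof (intro conjI allI impI ballI)
  have eqv: "equiv UNIV \<rho>" and cg: "\<And>a b c d. (a, b) \<in> \<rho> \<Longrightarrow> (c, d) \<in> \<rho> \<Longrightarrow> (a + c, b + d) \<in> \<rho> \<and> (a * c, b * d) \<in> \<rho>"
    using assms(2) unfolding congruence_def by blast+
  have rrefl: "\<And>a. (a, a) \<in> \<rho>" using eqv by (auto simp: equiv_def refl_on_def)
  have sym: "\<And>a b. (a, b) \<in> \<rho> \<Longrightarrow> (b, a) \<in> \<rho>" using eqv by (meson equiv_def symD)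
  have trans: "\<And>a b c. (a, b) \<in> \<rho> \<Longrightarrow> (b, c) \<in> \<rho> \<Longrightarrow> (a, c) \<in> \<rho>" using eqv by (meson equiv_def transD)
  show "Zrho \<rho> n {(0, 1)} = {}"
  proof (rule ccontr)
    assume "Zrho \<rho> n {(0, 1)} \<noteq> {}"
    then obtain P where "(eval 0 P, eval 1 P) \<in> \<rho>" by (auto simp: Zrho_def)
    hence 01: "(0, 1) \<in> \<rho>" by (simp add: eval_0 eval_1)
    have "\<And>a. (0, a) \<in> \<rho>" using cg[OF rrefl 01] by simp
    hence "\<And>a b. (a, b) \<in> \<rho>" using sym trans by blast
    thus False using assms(3) by auto
  qed
  show "\<And>f. f \<in> polys A n \<Longrightarrow> Zrho \<rho> n {(f, f)} = points n"
    by (auto simp: Zrho_def rrefl)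
  fix T1 T2 :: "('b mpoly \<times> 'b mpoly) set"
  assume "T1 \<noteq> {} \<and> T1 \<subseteq> polys A n \<times> polys A n \<and> T2 \<noteq> {} \<and> T2 \<subseteq> polys A n \<times> polys A n"
  have key: "(a1*a2 + b1*b2, a1*b2 + b1*a2) \<in> \<rho>" if "(a1, b1) \<in> \<rho>" for a1 b1 a2 b2 :: 'b
  proof -
    have "(a1*a2 + b1*b2, b1*a2 + a1*b2) \<in> \<rho>"
      using cg[OF cg[OF that rrefl[of a2], THEN conjunct2] cg[OF sym[OF that] rrefl[of b2], THEN conjunct2], THEN conjunct1] .
    thus ?thesis by (simp add: add.commute)
  qed
  have key2: "(a1*a2 + b1*b2, a1*b2 + b1*a2) \<in> \<rho>" if "(a2, b2) \<in> \<rho>" for a1 b1 a2 b2 :: 'b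
  proof -
    have "(a2*a1 + b2*b1, a2*b1 + b2*a1) \<in> \<rho>" by (rule key[OF that])
    thus ?thesis by (simp add: mult.commute add.commute)
  qed
  show "Zrho \<rho> n T1 \<union> Zrho \<rho> n T2 \<subseteq> Zrho \<rho> n (twist_set T1 T2)"
  proof
    fix P assume "P \<in> Zrho \<rho> n T1 \<union> Zrho \<rho> n T2"
    thus "P \<in> Zrho \<rho> n (twist_set T1 T2)"
    proof
      assume P: "P \<in> Zrho \<rho> n T1"
      show ?thesis using P unfolding Zrho_def twist_set_def twist_def
        by (auto simp: eval_add eval_mult intro!: key)
    next
      assume P: "P \<in> Zrho \<rho> n T2"
      show ?thesis using P unfolding Zrho_def twist_set_def twist_def
        by (auto simp: eval_add eval_mult intro!: key2)
    qed
  qed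
next
  fix \<V> :: "'b list set set"
  assume H: "\<forall>V\<in>\<V>. is_variety A \<rho> n V"
  show "is_variety A \<rho> n (points n \<inter> \<Inter>\<V>)"
  proof (cases "\<V> = {}")
    case True
    have "points n = Zrho \<rho> n {(0,0)}" using cong_refl[OF assms(2)] by (auto simp: Zrho_def)
    thus ?thesis using True zero_polys unfolding is_variety_def
      by (intro exI[of _ "{(0,0)}"]) auto
  next
    case False
    have "\<forall>V\<in>\<V>. \<exists>T. T \<noteq> {} \<and> T \<subseteq> polys A n \<times> polys A n \<and> V = Zrho \<rho> n T"
      using H unfolding is_variety_def by blast
    then obtain T where T0: "\<forall>V\<in>\<V>. T V \<noteq> {} \<and> T V \<subseteq> polys A n \<times> polys A n \<and> V = Zrho \<rho> n (T V)"
      by (rule bchoice[elim_format]) blast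
    have T1: "\<And>V. V \<in> \<V> \<Longrightarrow> T V \<noteq> {}" and T2: "\<And>V. V \<in> \<V> \<Longrightarrow> T V \<subseteq> polys A n \<times> polys A n"
      and eqV: "\<And>V. V\<in>\<V> \<Longrightarrow> Zrho \<rho> n (T V) = V" using T0 by auto
    have "points n \<inter> \<Inter>\<V> = Zrho \<rho> n (\<Union>V\<in>\<V>. T V)"
    proof -
      have "(\<Inter>V\<in>\<V>. Zrho \<rho> n (T V)) = \<Inter>\<V>" by (simp add: eqV)
      hence "points n \<inter> \<Inter>\<V> = points n \<inter> (\<Inter>V\<in>\<V>. Zrho \<rho> n (T V))" by simp
      also have "\<dots> = Zrho \<rho> n (\<Union>V\<in>\<V>. T V)" using False by (auto simp: Zrho_def)
      finally show ?thesis .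
    qed
    moreover have "(\<Union>V\<in>\<V>. T V) \<noteq> {}" using False T1 by blast
    moreover have "(\<Union>V\<in>\<V>. T V) \<subseteq> polys A n \<times> polys A n" using T2 by blast
    ultimately show ?thesis unfolding is_variety_def by blast
  qed
qed

end
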